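(* Let $\sigma>0$, $\lambda>0$, $\rho>0$ satisfy $\rho^{-2}\sigma<1$ and $\rho\le\lambda-2\rho^{-1}\sigma(1-\rho^{-2}\sigma)^{-1}$. Define $\sigma_1=\sigma$, $\lambda_1=\lambda$ and $\sigma_{k+1}=\lambda_k^{-2}\sigma_k^2$, $\lambda_{k+1}=\lambda_k-2\lambda_k^{-1}\sigma_k$ for $k\in\mathbb{Z}_{>0}$. Then the sequence $\{(\sigma_k,\lambda_k)\}_{k\ge1}$ is convergent, with $\sigma_k\to0$, $\lambda_k>0$ for all $k\in\mathbb{Z}_{>0}$, and $\lambda_k\downarrow\bar\lambda$ as $k\to\infty$ for some $\bar\lambda\ge\rho$. *)

theory Defs
  imports "HOL-Analysis.Analysis"
begin

text \<open>The iteration (sigma_k, lambda_k), indexed from 0: sl s l 0 = (sigma_1, lambda_1).\<close>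
primrec sl :: "real \<Rightarrow> real \<Rightarrow> nat \<Rightarrow> real \<times> real" where
  "sl s l 0 = (s, l)"
| "sl s l (Suc k) =
     (let sk = fst (sl s l k); lk = snd (sl s l k)
      in (sk ^ 2 / lk ^ 2, lk - 2 * sk / lk))"

end

theory Submission
  imports Defs
begin

theorem lemma4p1:
  fixes s l r :: real
  assumes "s > 0" and "l > 0" and "r > 0"
    and "s / r^2 < 1"
    and "r \<le> l - 2 * (s / r) / (1 - s / r^2)"
  shows "convergent (sl s l)
    \<and> (\<lambda>k. fst (sl s l k)) \<longlonglongrightarrow> 0
    \<and> (\<forall>k. snd (sl s l k) > 0)
    \<and> (\<exists>lbar. lbar \<ge> r \<and> decseq (\<lambda>k. snd (sl s l k))
                 \<and> (\<lambda>k. snd (sl s l k)) \<longlonglongrightarrow> lbar)"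
proof -
  define q where "q = s / r^2"
  have q0: "0 < q" using assms by (simp add: q_def)
  have q1: "q < 1" using assms by (simp add: q_def)
  define S where "S k = fst (sl s l k)" for k
  define L where "L k = snd (sl s l k)" for k
  have SS: "S (Suc k) = S k ^ 2 / L k ^ 2" for k by (simp add: S_def L_def Let_def)
  have LS: "L (Suc k) = L k - 2 * S k / L k" for k by (simp add: S_def L_def Let_def)
  have inv: "0 < S k \<and> S k \<le> s * q ^ k \<and> L k \<ge> r + 2 * (s / r) * q ^ k / (1 - q)" for k
  proof (induction k)
    case 0
    then show ?case using assms by (simp add: S_def L_def q_def)
  next
    case (Suc k)
    then have s0: "0 < S k" and s1: "S k \<le> s * q ^ k"
      and l1: "L k \<ge> r + 2 * (s / r) * q ^ k / (1 - q)" by auto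
    have pos: "0 \<le> 2 * (s / r) * q ^ k / (1 - q)" using assms q0 q1 by simp
    have lr: "L k \<ge> r" using l1 pos by linarith
    have Lpos: "L k > 0" using lr assms by linarith
    have a: "S k / L k \<le> S k / r" using s0 lr assms by (simp add: frac_le)
    have b: "2 * S k / L k \<le> 2 * (s * q ^ k) / r"
    proof -
      have "S k / r \<le> s * q ^ k / r" using s1 assms by (simp add: divide_right_mono)
      then show ?thesis using a by simp
    qed
    have c: "2 * (s / r) * q ^ k / (1 - q) - 2 * (s * q ^ k) / r = 2 * (s / r) * q ^ Suc k / (1 - q)"
      using q1 assms(3) by (simp add: field_simps)
    have L': "L (Suc k) \<ge> r + 2 * (s / r) * q ^ Suc k / (1 - q)"
      using LS[of k] l1 b c by linarith
    have d: "S k / L k ^ 2 \<le> S k / r ^ 2"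
      using s0 lr assms by (simp add: frac_le power_mono)
    have e: "S k / r ^ 2 \<le> q ^ Suc k"
      using s1 assms by (simp add: q_def divide_right_mono field_simps)
    have qk: "q ^ Suc k \<le> q" using q0 q1 by (simp add: power_le_one)
    have f: "S k / L k ^ 2 \<le> q" using d e qk by linarith
    have "S (Suc k) = S k * (S k / L k ^ 2)" by (simp add: SS power2_eq_square)
    also have "\<dots> \<le> (s * q ^ k) * q"
      using s0 s1 f Lpos by (intro mult_mono) auto
    finally have S1: "S (Suc k) \<le> s * q ^ Suc k" by (simp add: algebra_simps)
    have S0: "0 < S (Suc k)" using s0 Lpos by (simp add: SS)
    show ?case using S0 S1 L' by simp
  qed
  have Lge: "L k \<ge> r" for k
  proof -
    have "0 \<le> 2 * (s / r) * q ^ k / (1 - q)" using assms q0 q1 by simp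
    then show ?thesis using inv[of k] by linarith
  qed
  have Lpos: "\<forall>k. L k > 0" using Lge assms by (meson less_le_trans)
  have dec: "decseq L"
  proof (rule decseq_SucI)
    fix k
    have "0 < 2 * S k / L k" using inv[of k] Lpos by simp
    then show "L (Suc k) \<le> L k" using LS[of k] by linarith
  qed
  obtain lbar where lim: "L \<longlonglongrightarrow> lbar"
    using decseq_convergent[OF dec, of r] Lge by blast
  have lbr: "lbar \<ge> r"
    using LIMSEQ_le_const[OF lim] Lge by blast
  have Slim: "S \<longlonglongrightarrow> 0"
  proof (rule tendsto_sandwich[of "\<lambda>_. 0" _ _ "\<lambda>k. s * q ^ k"])
    show "\<forall>\<^sub>F n in sequentially. 0 \<le> S n" using inv by (simp add: less_imp_le)
    show "\<forall>\<^sub>F n in sequentially. S n \<le> s * q ^ n" using inv by simp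
    show "(\<lambda>n. 0::real) \<longlonglongrightarrow> 0" by simp
    have "(\<lambda>n. q ^ n) \<longlonglongrightarrow> 0" using q0 q1 by (simp add: LIMSEQ_realpow_zero)
    then show "(\<lambda>k. s * q ^ k) \<longlonglongrightarrow> 0" using tendsto_mult_right_zero by blast
  qed
  have "(\<lambda>k. (S k, L k)) \<longlonglongrightarrow> (0, lbar)" using tendsto_Pair[OF Slim lim] .
  then have "sl s l \<longlonglongrightarrow> (0, lbar)" by (simp add: S_def L_def)
  then have conv: "convergent (sl s l)" by (auto simp: convergent_def)
  show ?thesis using conv Slim Lpos dec lim lbr
    by (auto simp: S_def[abs_def] L_def[abs_def])
qed

end
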